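(* Let $n\ge1$, $N=2^n$. Then $S^{(0)}_{0,0}=0$, $S^{(0)}_{0,1}=1$, and for all $w$: (i) if $0\le i<N/2$, then $S^{(n)}_{i,w}=\sum_{0\le w'\le \min(w,N/2),\ w'\equiv w \ (\mathrm{mod}\ 2)} S^{(n-1)}_{i,w'}\binom{N/2-w'}{(w-w')/2}2^{w'}$; (ii) if $N/2\le i<N$, then $S^{(n)}_{i,2w}=S^{(n-1)}_{i-N/2,w}$ and $S^{(n)}_{i,2w+1}=0$. Moreover, the numbers $T^{(n)}_{i,w}$ satisfy exactly the same recursions (i) and (ii) (with $S$ replaced by $T$), with initial values $T^{(0)}_{0,0}=1$, $T^{(0)}_{0,1}=0$.
   Context: All vectors are binary (over $GF(2)$), indices are zero-based. Let $G_2=\begin{pmatrix}1&0\\1&1\end{pmatrix}$ and $G_N=G_2^{\otimes n}$ for $N=2^n$ (with $G_1=(1)$), and let $\mathbf{g}_0,\ldots,\mathbf{g}_{N-1}$ denote the rows of $G_N$. For $0\le i<N$, $S^{(n)}_{i,w}$ is the number of words of Hamming weight $w$ in $\mathbf{g}_i+\langle\mathbf{g}_{i+1},\ldots,\mathbf{g}_{N-1}\rangle$, and $T^{(n)}_{i,w}$ is the number of words of Hamming weight $w$ in the linear span $\langle\mathbf{g}_{i+1},\ldots,\mathbf{g}_{N-1}\rangle$. *)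

theory Defs
  imports Main "HOL-Library.Z2"
begin

text \<open>Vectors over GF(2) are functions nat => bit (the field Z2 from HOL-Library),
  with coordinates 0..N-1 and zero elsewhere.\<close>

definition G2 :: "nat \<Rightarrow> nat \<Rightarrow> bit" where
  "G2 a b = (if a < 2 \<and> b < 2 \<and> b \<le> a then 1 else 0)"

text \<open>Kronecker power: G_{2^(n+1)} = G_2 \<otimes> G_{2^n}, G_1 = (1).\<close>
fun Gmat :: "nat \<Rightarrow> nat \<Rightarrow> nat \<Rightarrow> bit" where
  "Gmat 0 i j = (if i = 0 \<and> j = 0 then 1 else 0)"
| "Gmat (Suc n) i j =
     (if i < 2 ^ Suc n \<and> j < 2 ^ Suc n
      then G2 (i div 2 ^ n) (j div 2 ^ n) * Gmat n (i mod 2 ^ n) (j mod 2 ^ n)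
      else 0)"

definition grow :: "nat \<Rightarrow> nat \<Rightarrow> nat \<Rightarrow> bit" where
  "grow n i = (\<lambda>j. Gmat n i j)"

definition spanTail :: "nat \<Rightarrow> nat \<Rightarrow> (nat \<Rightarrow> bit) set" where
  "spanTail n i = {v. \<exists>c :: nat \<Rightarrow> bit.
      v = (\<lambda>j. \<Sum>k\<in>{i+1..<2^n}. c k * grow n k j)}"

definition hweight :: "nat \<Rightarrow> (nat \<Rightarrow> bit) \<Rightarrow> nat" where
  "hweight n v = card {j. j < 2 ^ n \<and> v j \<noteq> 0}"

definition Snum :: "nat \<Rightarrow> nat \<Rightarrow> nat \<Rightarrow> nat" where
  "Snum n i w = card {v. (\<exists>u\<in>spanTail n i. v = (\<lambda>j. grow n i j + u j)) \<and> hweight n v = w}"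

definition Tnum :: "nat \<Rightarrow> nat \<Rightarrow> nat \<Rightarrow> nat" where
  "Tnum n i w = card {v \<in> spanTail n i. hweight n v = w}"

end

theory Submission imports Defs begin
declare add_bit_eq_xor[simp del] mult_bit_eq_and[simp del]

definition cat :: "nat \<Rightarrow> (nat \<Rightarrow> bit) \<Rightarrow> (nat \<Rightarrow> bit) \<Rightarrow> nat \<Rightarrow> bit" where
 "cat m x y = (\<lambda>j. if j < 2^m then x j else if j < 2*2^m then y (j - 2^m) else 0)"
definition Vm :: "nat \<Rightarrow> (nat \<Rightarrow> bit) set" where "Vm m = {v. \<forall>j\<ge>2^m. v j = 0}"
definition spanS :: "nat \<Rightarrow> nat set \<Rightarrow> (nat \<Rightarrow> bit) set" where
 "spanS m A = {v. \<exists>c::nat\<Rightarrow>bit. v = (\<lambda>j. \<Sum>k\<in>A. c k * grow m k j)}"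

lemma Gmat_out: "i \<ge> 2^m \<or> j \<ge> 2^m \<Longrightarrow> Gmat m i j = 0"
  by (cases m) auto

lemma grow_out: "j \<ge> 2^m \<Longrightarrow> grow m k j = 0"
  by (simp add: grow_def Gmat_out)

lemma grow_low: assumes "k < 2^m"
  shows "grow (Suc m) k j = (if j < 2^m then grow m k j else 0)"
proof -
  have kd: "k div 2^m = 0" "k mod 2^m = k" using assms by auto
  show ?thesis
  proof (cases "j < 2^m")
    case True then show ?thesis using assms kd by (simp add: grow_def G2_def)
  next
    case False
    then have "j div 2^m \<noteq> 0" by (simp add: div_eq_0_iff)
    then show ?thesis using assms kd False by (auto simp add: grow_def G2_def)
  qed
qed

lemma grow_high: assumes "k < 2^m"
  shows "grow (Suc m) (k + 2^m) j = (if j < 2^m then grow m k j else if j < 2*2^m then grow m k (j - 2^m) else 0)"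
proof -
  have kd: "(k + 2^m) div 2^m = 1" "(k+2^m) mod 2^m = k" using assms by (auto simp: div_add_self2)
  show ?thesis
  proof (cases "j < 2^m")
    case True then show ?thesis using assms kd by (simp add: grow_def G2_def)
  next
    case False
    show ?thesis
    proof (cases "j < 2*2^m")
      case True
      then have "j div 2^m = 1" "j mod 2^m = j - 2^m" using False
        by (auto simp add: div_nat_eqI le_mod_geq)
      then show ?thesis using assms kd False True by (auto simp add: grow_def G2_def)
    next
      case F2: False
      then show ?thesis using False by (auto simp add: grow_def)
    qed
  qed
qed

lemma spanS_Vm: "spanS m A \<subseteq> Vm m"
  by (auto simp add: spanS_def Vm_def grow_out)

lemma sum_eq:
  assumes "A0 \<subseteq> {..<2^m}" "A1 \<subseteq> {..<2^m}"
  shows "(\<lambda>j. \<Sum>k\<in>A0 \<union> (\<lambda>k. k + 2^m) ` A1. c k * grow (Suc m) k j) =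
    cat m (\<lambda>j. (\<Sum>k\<in>A0. c k * grow m k j) + (\<Sum>k\<in>A1. c (k + 2^m) * grow m k j))
          (\<lambda>j. \<Sum>k\<in>A1. c (k + 2^m) * grow m k j)"
proof
  fix j
  have f0: "finite A0" "finite A1" using assms finite_subset by auto
  have d: "A0 \<inter> (\<lambda>k. k + 2^m) ` A1 = {}" using assms by auto
  have "(\<Sum>k\<in>A0 \<union> (\<lambda>k. k + 2^m) ` A1. c k * grow (Suc m) k j) =
     (\<Sum>k\<in>A0. c k * grow (Suc m) k j) + (\<Sum>k\<in>A1. c (k + 2^m) * grow (Suc m) (k + 2^m) j)"
    using f0 d by (simp add: sum.union_disjoint sum.reindex)
  also have "\<dots> = (\<Sum>k\<in>A0. c k * (if j < 2^m then grow m k j else 0)) +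
     (\<Sum>k\<in>A1. c (k + 2^m) * (if j < 2^m then grow m k j else if j < 2*2^m then grow m k (j - 2^m) else 0))"
    using assms by (auto intro!: sum.cong arg_cong2[where f="(+)"] simp add: grow_low grow_high subsetD)
  also have "\<dots> = cat m (\<lambda>j. (\<Sum>k\<in>A0. c k * grow m k j) + (\<Sum>k\<in>A1. c (k + 2^m) * grow m k j))
          (\<lambda>j. \<Sum>k\<in>A1. c (k + 2^m) * grow m k j) j"
    by (auto simp add: cat_def grow_out)
  finally show "(\<Sum>k\<in>A0 \<union> (\<lambda>k. k + 2^m) ` A1. c k * grow (Suc m) k j) = cat m (\<lambda>j. (\<Sum>k\<in>A0. c k * grow m k j) + (\<Sum>k\<in>A1. c (k + 2^m) * grow m k j))
          (\<lambda>j. \<Sum>k\<in>A1. c (k + 2^m) * grow m k j) j" .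
qed

lemma span_split:
  assumes "A0 \<subseteq> {..<2^m}" "A1 \<subseteq> {..<2^m}"
  shows "spanS (Suc m) (A0 \<union> (\<lambda>k. k + 2^m) ` A1) =
     {cat m (\<lambda>j. a j + b j) b | a b. a \<in> spanS m A0 \<and> b \<in> spanS m A1}"
proof
  show "spanS (Suc m) (A0 \<union> (\<lambda>k. k + 2^m) ` A1) \<subseteq> {cat m (\<lambda>j. a j + b j) b | a b. a \<in> spanS m A0 \<and> b \<in> spanS m A1}"
    unfolding spanS_def using sum_eq[OF assms] by fastforce
next
  show "{cat m (\<lambda>j. a j + b j) b | a b. a \<in> spanS m A0 \<and> b \<in> spanS m A1} \<subseteq> spanS (Suc m) (A0 \<union> (\<lambda>k. k + 2^m) ` A1)"
  proof
    fix v assume "v \<in> {cat m (\<lambda>j. a j + b j) b | a b. a \<in> spanS m A0 \<and> b \<in> spanS m A1}"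
    then obtain c0 c1 where v: "v = cat m (\<lambda>j. (\<Sum>k\<in>A0. c0 k * grow m k j) + (\<Sum>k\<in>A1. c1 k * grow m k j))
          (\<lambda>j. \<Sum>k\<in>A1. c1 k * grow m k j)" unfolding spanS_def by auto
    define c where "c k = (if k < 2^m then c0 k else c1 (k - 2^m))" for k
    have e0: "(\<Sum>k\<in>A0. c0 k * grow m k j) = (\<Sum>k\<in>A0. c k * grow m k j)" for j
      using assms by (auto intro!: sum.cong simp: c_def)
    have e1: "(\<Sum>k\<in>A1. c1 k * grow m k j) = (\<Sum>k\<in>A1. c (k + 2^m) * grow m k j)" for j
      using assms by (auto intro!: sum.cong simp: c_def)
    have "v = (\<lambda>j. \<Sum>k\<in>A0 \<union> (\<lambda>k. k + 2^m) ` A1. c k * grow (Suc m) k j)"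
      unfolding v sum_eq[OF assms] e0 e1 ..
    then show "v \<in> spanS (Suc m) (A0 \<union> (\<lambda>k. k + 2^m) ` A1)" unfolding spanS_def by blast
  qed
qed


lemma spanS_empty: "spanS m {} = {\<lambda>j. 0}"
  by (simp add: spanS_def)

lemma split_lt: "{..<2^Suc m} = {..<2^m} \<union> (\<lambda>k. k + 2^m) ` {..<(2::nat)^m}"
proof -
  have "x \<in> (\<lambda>k. k + 2^m) ` {..<(2::nat)^m}" if "2^m \<le> x" "x < 2*2^m" for x
    using that by (intro image_eqI[where x="x - 2^m"]) auto
  then show ?thesis by auto (meson not_le)
qed

lemma spanS_full: "spanS m {..<2^m} = Vm m"
proof (induction m)
  case 0
  show ?case
  proof
    show "spanS 0 {..<2^0} \<subseteq> Vm 0" by (rule spanS_Vm)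
    show "Vm 0 \<subseteq> spanS 0 {..<2^0}"
    proof
      fix v assume "v \<in> Vm 0"
      then have "v = (\<lambda>j. \<Sum>k\<in>{..<2^0}. (\<lambda>_. v 0) k * grow 0 k j)"
        by (auto simp: Vm_def grow_def)
      then have "\<exists>c. v = (\<lambda>j. \<Sum>k\<in>{..<2^0}. c k * grow 0 k j)" by (rule exI[of _ "\<lambda>_. v 0"])
      then show "v \<in> spanS 0 {..<2^0}" unfolding spanS_def by blast
    qed
  qed
next
  case (Suc m)
  show ?case
  proof
    show "spanS (Suc m) {..<2^Suc m} \<subseteq> Vm (Suc m)" by (rule spanS_Vm)
    show "Vm (Suc m) \<subseteq> spanS (Suc m) {..<2^Suc m}"
    proof
      fix v assume v: "v \<in> Vm (Suc m)"
      define b where "b j = (if j < 2^m then v (j + 2^m) else 0)" for j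
      define a where "a j = (if j < 2^m then v j + b j else 0)" for j
      have ab: "a \<in> Vm m" "b \<in> Vm m" by (auto simp: Vm_def a_def b_def)
      have "v = cat m (\<lambda>j. a j + b j) b"
      proof
        fix j
        show "v j = cat m (\<lambda>j. a j + b j) b j"
        proof (cases "j < 2^m")
          case True then show ?thesis by (simp add: cat_def a_def add.assoc)
        next
          case False then show ?thesis using v by (auto simp: cat_def a_def b_def Vm_def)
        qed
      qed
      then show "v \<in> spanS (Suc m) {..<2^Suc m}"
        unfolding split_lt span_split[OF order_refl order_refl] Suc using ab by blast
    qed
  qed
qed

lemma hweight_cat: "hweight (Suc m) (cat m x y) = hweight m x + hweight m y"
proof -
  have e: "{j. j < 2^Suc m \<and> cat m x y j \<noteq> 0} = {j. j < 2^m \<and> x j \<noteq> 0} \<union> (\<lambda>k. k + 2^m) ` {j. j < 2^m \<and> y j \<noteq> 0}"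
  proof -
    have "j \<in> (\<lambda>k. k + 2^m) ` {j. j < 2^m \<and> y j \<noteq> 0}" if "2^m \<le> j" "j < 2*2^m" "y (j - 2^m) \<noteq> 0" for j
      using that by (intro image_eqI[where x="j - 2^m"]) auto
    then show ?thesis by (auto simp: cat_def) (meson not_le)
  qed
  have "card ({j. j < 2^m \<and> x j \<noteq> 0} \<union> (\<lambda>k. k + 2^m) ` {j. j < 2^m \<and> y j \<noteq> 0}) =
     card {j. j < 2^m \<and> x j \<noteq> 0} + card ((\<lambda>k. k + 2^m) ` {j. j < 2^m \<and> y j \<noteq> 0})"
    by (rule card_Un_disjoint) auto
  also have "card ((\<lambda>k. k + 2^m) ` {j. j < 2^m \<and> y j \<noteq> 0}) = card {j. j < 2^m \<and> y j \<noteq> 0}"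
    by (rule card_image) auto
  finally show ?thesis unfolding hweight_def e .
qed

lemma hweight_le: "hweight m x \<le> 2^m"
proof -
  have "card {j. j < 2^m \<and> x j \<noteq> 0} \<le> card {..<(2::nat)^m}" by (rule card_mono) auto
  then show ?thesis by (simp add: hweight_def)
qed

definition ind :: "nat set \<Rightarrow> nat \<Rightarrow> bit" where "ind B = (\<lambda>j. if j \<in> B then 1 else 0)"

lemma Vm_ind: "Vm m = ind ` Pow {..<2^m}"
proof
  show "ind ` Pow {..<2^m} \<subseteq> Vm m" by (auto simp: ind_def Vm_def)
  show "Vm m \<subseteq> ind ` Pow {..<2^m}"
  proof
    fix v assume "v \<in> Vm m"
    then have "v = ind {j. j < 2^m \<and> v j \<noteq> 0}" by (auto simp: ind_def Vm_def fun_eq_iff)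
    then show "v \<in> ind ` Pow {..<2^m}" by auto
  qed
qed

lemma inj_ind: "inj ind"
  by (rule injI) (auto simp: ind_def fun_eq_iff split: if_splits)

lemma finite_Vm: "finite (Vm m)"
  by (simp add: Vm_ind)

lemma hweight_ind: "B \<subseteq> {..<2^m} \<Longrightarrow> hweight m (ind B) = card B"
  by (auto simp: hweight_def ind_def intro!: arg_cong[where f=card])


lemma count_sets:
  assumes "finite U" "X \<subseteq> U"
  shows "card {B. B \<subseteq> U \<and> card (B - X) = k} = 2 ^ card X * (card (U - X) choose k)"
proof -
  have fX: "finite X" using assms finite_subset by blast
  have e: "{B. B \<subseteq> U \<and> card (B - X) = k} = (\<lambda>(E,D). E \<union> D) ` (Pow X \<times> {D. D \<subseteq> U - X \<and> card D = k})"
  proof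
    show "{B. B \<subseteq> U \<and> card (B - X) = k} \<subseteq> (\<lambda>(E,D). E \<union> D) ` (Pow X \<times> {D. D \<subseteq> U - X \<and> card D = k})"
    proof
      fix B assume "B \<in> {B. B \<subseteq> U \<and> card (B - X) = k}"
      then have "B = (\<lambda>(E,D). E \<union> D) (B \<inter> X, B - X)" "(B \<inter> X, B - X) \<in> Pow X \<times> {D. D \<subseteq> U - X \<and> card D = k}"
        by auto
      then show "B \<in> (\<lambda>(E,D). E \<union> D) ` (Pow X \<times> {D. D \<subseteq> U - X \<and> card D = k})" by blast
    qed
  next
    show "(\<lambda>(E,D). E \<union> D) ` (Pow X \<times> {D. D \<subseteq> U - X \<and> card D = k}) \<subseteq> {B. B \<subseteq> U \<and> card (B - X) = k}"
    proof
      fix B assume "B \<in> (\<lambda>(E,D). E \<union> D) ` (Pow X \<times> {D. D \<subseteq> U - X \<and> card D = k})"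
      then obtain E D where B: "B = E \<union> D" "E \<subseteq> X" "D \<subseteq> U - X" "card D = k" by auto
      then have "B - X = D" by auto
      then show "B \<in> {B. B \<subseteq> U \<and> card (B - X) = k}" using B assms by auto
    qed
  qed
  have inj: "inj_on (\<lambda>(E,D). E \<union> D) (Pow X \<times> {D. D \<subseteq> U - X \<and> card D = k})"
  proof (rule inj_onI)
    fix p q assume p: "p \<in> Pow X \<times> {D. D \<subseteq> U - X \<and> card D = k}" and q: "q \<in> Pow X \<times> {D. D \<subseteq> U - X \<and> card D = k}"
      and eq: "(\<lambda>(E,D). E \<union> D) p = (\<lambda>(E,D). E \<union> D) q"
    obtain E1 D1 where p1: "p = (E1, D1)" by force
    obtain E2 D2 where q1: "q = (E2, D2)" by force
    have "E1 = (E1 \<union> D1) \<inter> X" "E2 = (E2 \<union> D2) \<inter> X" "D1 = (E1 \<union> D1) - X" "D2 = (E2 \<union> D2) - X"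
      using p q p1 q1 by auto
    then show "p = q" using eq p1 q1 by auto
  qed
  have "card {B. B \<subseteq> U \<and> card (B - X) = k} = card (Pow X) * card {D. D \<subseteq> U - X \<and> card D = k}"
    unfolding e card_image[OF inj] card_cartesian_product ..
  also have "\<dots> = 2 ^ card X * (card (U - X) choose k)"
    using fX assms by (simp add: card_Pow n_subsets)
  finally show ?thesis .
qed

lemma count_b:
  assumes x: "x \<in> Vm m"
  shows "card {b \<in> Vm m. hweight m (\<lambda>j. x j + b j) + hweight m b = w} =
    (if hweight m x \<le> w \<and> hweight m x mod 2 = w mod 2
     then (2^m - hweight m x choose ((w - hweight m x) div 2)) * 2 ^ hweight m x else 0)"
proof -
  define U where "U = {..<(2::nat)^m}"
  define X where "X = {j. j < 2^m \<and> x j \<noteq> 0}"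
  have XU: "X \<subseteq> U" "finite U" by (auto simp: X_def U_def)
  have xX: "x = ind X" using x by (auto simp: ind_def Vm_def X_def fun_eq_iff)
  have hx: "hweight m x = card X" by (simp add: hweight_def X_def)
  have cU: "card U = 2^m" by (simp add: U_def)
  have fB: "finite B" if "B \<subseteq> U" for B using that XU finite_subset by blast
  have key: "hweight m (\<lambda>j. x j + ind B j) + hweight m (ind B) = card X + 2 * card (B - X)"
    if B: "B \<subseteq> U" for B
  proof -
    have "{j. j < 2^m \<and> ind X j + ind B j \<noteq> 0} = (X - B) \<union> (B - X)"
      using B XU by (auto simp: ind_def U_def)
    then have "hweight m (\<lambda>j. x j + ind B j) = card (X - B) + card (B - X)"
    proof -
      have "card ((X - B) \<union> (B - X)) = card (X - B) + card (B - X)"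
        by (rule card_Un_disjoint) (use fB[OF B] fB[OF XU(1)] in auto)
      then show ?thesis unfolding hweight_def xX using \<open>{j. j < 2^m \<and> ind X j + ind B j \<noteq> 0} = (X - B) \<union> (B - X)\<close> by simp
    qed
    moreover have "hweight m (ind B) = card B" using B by (simp add: hweight_ind U_def)
    moreover have "card B = card (B \<inter> X) + card (B - X)" using fB[OF B] by (rule card_Int_Diff)
    moreover have "card X = card (X \<inter> B) + card (X - B)" using fB[OF XU(1)] by (rule card_Int_Diff)
    ultimately show ?thesis by (simp add: Int_commute)
  qed
  have e: "{b \<in> Vm m. hweight m (\<lambda>j. x j + b j) + hweight m b = w} =
      ind ` {B. B \<subseteq> U \<and> card X + 2 * card (B - X) = w}"
    unfolding Vm_ind U_def[symmetric] using key by auto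
  have c: "card {b \<in> Vm m. hweight m (\<lambda>j. x j + b j) + hweight m b = w} =
      card {B. B \<subseteq> U \<and> card X + 2 * card (B - X) = w}"
    unfolding e by (rule card_image) (rule inj_on_subset[OF inj_ind], simp)
  show ?thesis
  proof (cases "card X \<le> w \<and> card X mod 2 = w mod 2")
    case True
    then have "{B. B \<subseteq> U \<and> card X + 2 * card (B - X) = w} = {B. B \<subseteq> U \<and> card (B - X) = (w - card X) div 2}"
      by auto presburger+
    moreover have "card (U - X) = 2^m - card X" using XU cU by (simp add: card_Diff_subset finite_subset)
    ultimately show ?thesis using True c count_sets[OF XU(2) XU(1)] hx by (simp add: mult.commute)
  next
    case False
    then have "{B. B \<subseteq> U \<and> card X + 2 * card (B - X) = w} = {}" by auto
    then have "card {B. B \<subseteq> U \<and> card X + 2 * card (B - X) = w} = 0" by (simp only: card.empty)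
    then show ?thesis using False c hx by auto
  qed
qed


lemma cat_inj:
  assumes "x \<in> Vm m" "y \<in> Vm m" "a \<in> Vm m" "b \<in> Vm m" "cat m x a = cat m y b"
  shows "x = y \<and> a = b"
proof
  show "x = y"
  proof
    fix j show "x j = y j"
    proof (cases "j < 2^m")
      case True then show ?thesis using fun_cong[OF assms(5), of j] by (simp add: cat_def)
    next
      case False then show ?thesis using assms(1,2) by (simp add: Vm_def)
    qed
  qed
  show "a = b"
  proof
    fix j show "a j = b j"
    proof (cases "j < 2^m")
      case True then show ?thesis using fun_cong[OF assms(5), of "j + 2^m"] by (simp add: cat_def)
    next
      case False then show ?thesis using assms(3,4) by (simp add: Vm_def)
    qed
  qed
qed

lemma count_double:
  assumes C: "C \<subseteq> Vm m"
  shows "card {v \<in> (\<lambda>x. cat m x x) ` C. hweight (Suc m) v = W} = card {x \<in> C. 2 * hweight m x = W}"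
proof -
  have e: "{v \<in> (\<lambda>x. cat m x x) ` C. hweight (Suc m) v = W} = (\<lambda>x. cat m x x) ` {x \<in> C. 2 * hweight m x = W}"
    by (auto simp: hweight_cat)
  have "inj_on (\<lambda>x. cat m x x) {x \<in> C. 2 * hweight m x = W}"
    by (rule inj_onI) (use C cat_inj in blast)
  then show ?thesis unfolding e by (rule card_image)
qed

lemma count_pair:
  assumes C: "C \<subseteq> Vm m"
  shows "card {v \<in> {cat m (\<lambda>j. x j + b j) b | x b. x \<in> C \<and> b \<in> Vm m}. hweight (Suc m) v = w} =
    (\<Sum>w'\<in>{w'. w' \<le> min w (2^m) \<and> w' mod 2 = w mod 2}.
       card {x \<in> C. hweight m x = w'} * ((2^m - w') choose ((w - w') div 2)) * 2 ^ w')"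
proof -
  define f where "f w' = (if w' \<le> w \<and> w' mod 2 = w mod 2
     then (2^m - w' choose ((w - w') div 2)) * 2 ^ w' else 0)" for w'
  have fC: "finite C" using C finite_Vm finite_subset by blast
  have e: "{v \<in> {cat m (\<lambda>j. x j + b j) b | x b. x \<in> C \<and> b \<in> Vm m}. hweight (Suc m) v = w} =
     (\<lambda>(x,b). cat m (\<lambda>j. x j + b j) b) ` (SIGMA x:C. {b \<in> Vm m. hweight m (\<lambda>j. x j + b j) + hweight m b = w})"
    by (auto simp: hweight_cat)
  have inj: "inj_on (\<lambda>(x,b). cat m (\<lambda>j. x j + b j) b) (SIGMA x:C. {b \<in> Vm m. hweight m (\<lambda>j. x j + b j) + hweight m b = w})"
  proof (rule inj_onI)
    fix p q assume p: "p \<in> (SIGMA x:C. {b \<in> Vm m. hweight m (\<lambda>j. x j + b j) + hweight m b = w})"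
      and q: "q \<in> (SIGMA x:C. {b \<in> Vm m. hweight m (\<lambda>j. x j + b j) + hweight m b = w})"
      and eq: "(\<lambda>(x,b). cat m (\<lambda>j. x j + b j) b) p = (\<lambda>(x,b). cat m (\<lambda>j. x j + b j) b) q"
    obtain x1 b1 where p1: "p = (x1, b1)" by force
    obtain x2 b2 where q1: "q = (x2, b2)" by force
    have in1: "x1 \<in> Vm m" "b1 \<in> Vm m" "x2 \<in> Vm m" "b2 \<in> Vm m" using p q p1 q1 C by auto
    then have "(\<lambda>j. x1 j + b1 j) \<in> Vm m" "(\<lambda>j. x2 j + b2 j) \<in> Vm m" by (auto simp: Vm_def)
    then have "(\<lambda>j. x1 j + b1 j) = (\<lambda>j. x2 j + b2 j) \<and> b1 = b2"
      using cat_inj in1 eq p1 q1 by simp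
    then have "x1 = x2 \<and> b1 = b2" by (auto simp: fun_eq_iff)
    then show "p = q" using p1 q1 by simp
  qed
  have "card {v \<in> {cat m (\<lambda>j. x j + b j) b | x b. x \<in> C \<and> b \<in> Vm m}. hweight (Suc m) v = w} =
     (\<Sum>x\<in>C. card {b \<in> Vm m. hweight m (\<lambda>j. x j + b j) + hweight m b = w})"
    unfolding e card_image[OF inj] using fC finite_Vm by simp
  also have "\<dots> = (\<Sum>x\<in>C. f (hweight m x))"
    using C count_b by (auto intro!: sum.cong simp: f_def)
  also have "\<dots> = (\<Sum>w'\<in>{..2^m}. \<Sum>x\<in>{x\<in>C. hweight m x = w'}. f (hweight m x))"
    by (rule sum.group[symmetric]) (use fC hweight_le in auto)
  also have "\<dots> = (\<Sum>w'\<in>{..2^m}. card {x \<in> C. hweight m x = w'} * f w')"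
    by (rule sum.cong) auto
  also have "\<dots> = (\<Sum>w'\<in>{w'. w' \<le> min w (2^m) \<and> w' mod 2 = w mod 2}. card {x \<in> C. hweight m x = w'} * f w')"
    by (rule sum.mono_neutral_right) (auto simp: f_def)
  also have "\<dots> = (\<Sum>w'\<in>{w'. w' \<le> min w (2^m) \<and> w' mod 2 = w mod 2}.
       card {x \<in> C. hweight m x = w'} * ((2^m - w') choose ((w - w') div 2)) * 2 ^ w')"
    by (rule sum.cong) (auto simp: f_def)
  finally show ?thesis .
qed


definition coset :: "nat \<Rightarrow> nat \<Rightarrow> (nat \<Rightarrow> bit) set" where
  "coset m i = (\<lambda>u. (\<lambda>j. grow m i j + u j)) ` spanTail m i"

lemma Snum_eq: "Snum m i w = card {v \<in> coset m i. hweight m v = w}"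
  unfolding Snum_def coset_def by (rule arg_cong[where f=card]) auto

lemma spanTail_eq: "spanTail m i = spanS m {i+1..<2^m}"
  by (simp add: spanTail_def spanS_def)

lemma spanTail_Vm: "spanTail m i \<subseteq> Vm m"
  using spanS_Vm spanTail_eq by metis

lemma coset_Vm: "coset m i \<subseteq> Vm m"
  using spanTail_Vm[of m i] by (auto simp: coset_def Vm_def grow_out subset_iff)

lemma span_high: assumes "i' < 2^m"
  shows "spanTail (Suc m) (i' + 2^m) = (\<lambda>b. cat m b b) ` spanTail m i'"
proof -
  have s: "{i' + 2^m + 1..<2^Suc m} = {} \<union> (\<lambda>k. k + 2^m) ` {i'+1..<2^m}"
  proof -
    have "x \<in> (\<lambda>k. k + 2^m) ` {i'+1..<2^m}" if "i' + 2^m + 1 \<le> x" "x < 2*2^m" for x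
      using that by (intro image_eqI[where x="x - 2^m"]) auto
    then show ?thesis by auto
  qed
  have "spanTail (Suc m) (i' + 2^m) = spanS (Suc m) ({} \<union> (\<lambda>k. k + 2^m) ` {i'+1..<2^m})"
    by (simp only: spanTail_eq s)
  also have "\<dots> = {cat m (\<lambda>j. a j + b j) b | a b. a \<in> spanS m {} \<and> b \<in> spanS m {i'+1..<2^m}}"
    by (rule span_split) auto
  also have "\<dots> = (\<lambda>b. cat m b b) ` spanTail m i'"
    by (auto simp: spanS_empty spanTail_eq)
  finally show ?thesis .
qed

lemma coset_high: assumes "i' < 2^m"
  shows "coset (Suc m) (i' + 2^m) = (\<lambda>x. cat m x x) ` coset m i'"
proof -
  have g: "(\<lambda>j. grow (Suc m) (i' + 2^m) j + cat m b b j) = cat m (\<lambda>j. grow m i' j + b j) (\<lambda>j. grow m i' j + b j)" for b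
    using assms by (auto simp: fun_eq_iff grow_high cat_def)
  show ?thesis unfolding coset_def span_high[OF assms] image_image g ..
qed

lemma span_low: assumes "i < 2^m"
  shows "spanTail (Suc m) i = {cat m (\<lambda>j. a j + b j) b | a b. a \<in> spanTail m i \<and> b \<in> Vm m}"
proof -
  have s: "{i + 1..<2^Suc m} = {i+1..<2^m} \<union> (\<lambda>k. k + 2^m) ` {..<2^m}"
  proof -
    have "x \<in> (\<lambda>k. k + 2^m) ` {..<2^m}" if "2^m \<le> x" "x < 2*2^m" for x :: nat
      using that by (intro image_eqI[where x="x - 2^m"]) auto
    then show ?thesis using assms by auto (meson not_le)
  qed
  have "spanTail (Suc m) i = spanS (Suc m) ({i+1..<2^m} \<union> (\<lambda>k. k + 2^m) ` {..<2^m})"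
    by (simp only: spanTail_eq s)
  also have "\<dots> = {cat m (\<lambda>j. a j + b j) b | a b. a \<in> spanS m {i+1..<2^m} \<and> b \<in> spanS m {..<2^m}}"
    by (rule span_split) auto
  also have "\<dots> = {cat m (\<lambda>j. a j + b j) b | a b. a \<in> spanTail m i \<and> b \<in> Vm m}"
    by (simp only: spanS_full spanTail_eq)
  finally show ?thesis .
qed

lemma coset_low: assumes "i < 2^m"
  shows "coset (Suc m) i = {cat m (\<lambda>j. x j + b j) b | x b. x \<in> coset m i \<and> b \<in> Vm m}"
proof -
  have g: "(\<lambda>j. grow (Suc m) i j + cat m (\<lambda>j. a j + b j) b j) = cat m (\<lambda>j. (grow m i j + a j) + b j) b" for a b
    using assms by (auto simp: fun_eq_iff grow_low cat_def add.assoc)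
  show ?thesis
  proof
    show "coset (Suc m) i \<subseteq> {cat m (\<lambda>j. x j + b j) b | x b. x \<in> coset m i \<and> b \<in> Vm m}"
    proof
      fix v assume "v \<in> coset (Suc m) i"
      then obtain a b where v: "v = cat m (\<lambda>j. (grow m i j + a j) + b j) b" "a \<in> spanTail m i" "b \<in> Vm m"
        unfolding coset_def span_low[OF assms] using g by auto
      have "(\<lambda>j. grow m i j + a j) \<in> coset m i" using v(2) by (auto simp: coset_def)
      then show "v \<in> {cat m (\<lambda>j. x j + b j) b | x b. x \<in> coset m i \<and> b \<in> Vm m}"
        by (intro CollectI exI[of _ "\<lambda>j. grow m i j + a j"] exI[of _ b]) (use v in simp)
    qed
  next
    show "{cat m (\<lambda>j. x j + b j) b | x b. x \<in> coset m i \<and> b \<in> Vm m} \<subseteq> coset (Suc m) i"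
    proof
      fix v assume "v \<in> {cat m (\<lambda>j. x j + b j) b | x b. x \<in> coset m i \<and> b \<in> Vm m}"
      then obtain a b where v: "v = cat m (\<lambda>j. (grow m i j + a j) + b j) b" "a \<in> spanTail m i" "b \<in> Vm m"
        unfolding coset_def by auto
      have "cat m (\<lambda>j. a j + b j) b \<in> spanTail (Suc m) i" unfolding span_low[OF assms] using v by blast
      then show "v \<in> coset (Suc m) i" unfolding coset_def v(1) g[symmetric] by blast
    qed
  qed
qed


lemma base_span: "spanTail 0 0 = {\<lambda>j. 0}"
  by (simp add: spanTail_eq spanS_empty)

lemma hw_g00: "hweight 0 (\<lambda>j. grow 0 0 j + 0) = 1"
proof -
  have "{j. j < 2^0 \<and> grow 0 0 j + 0 \<noteq> 0} = {0}" by (auto simp: grow_def)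
  then show ?thesis by (simp add: hweight_def)
qed

lemma hw_zero: "hweight m (\<lambda>j. 0) = 0"
  by (simp add: hweight_def)

lemma odd_empty: "{x \<in> C. 2 * (f x :: nat) = Suc (2*w)} = {}"
  by auto presburger

lemma card_single: "P a \<Longrightarrow> card {v. v = a \<and> P v} = 1"
proof -
  assume "P a" then have "{v. v = a \<and> P v} = {a}" by auto
  then show ?thesis by simp
qed

lemma Snum_low: "i < 2^m \<Longrightarrow> Snum (Suc m) i w = (\<Sum>w'\<in>{w'. w' \<le> min w (2^m) \<and> w' mod 2 = w mod 2}.
       Snum m i w' * ((2^m - w') choose ((w - w') div 2)) * 2 ^ w')"
  unfolding Snum_eq coset_low count_pair[OF coset_Vm] by simp

lemma Tnum_low: "i < 2^m \<Longrightarrow> Tnum (Suc m) i w = (\<Sum>w'\<in>{w'. w' \<le> min w (2^m) \<and> w' mod 2 = w mod 2}.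
       Tnum m i w' * ((2^m - w') choose ((w - w') div 2)) * 2 ^ w')"
  unfolding Tnum_def span_low count_pair[OF spanTail_Vm] by simp

lemma Snum_high: "i' < 2^m \<Longrightarrow> Snum (Suc m) (i' + 2^m) (2*w) = Snum m i' w \<and> Snum (Suc m) (i' + 2^m) (2*w+1) = 0"
  unfolding Snum_eq coset_high count_double[OF coset_Vm] by (simp add: odd_empty)

lemma Tnum_high: "i' < 2^m \<Longrightarrow> Tnum (Suc m) (i' + 2^m) (2*w) = Tnum m i' w \<and> Tnum (Suc m) (i' + 2^m) (2*w+1) = 0"
  unfolding Tnum_def span_high count_double[OF spanTail_Vm] by (simp add: odd_empty)

theorem mainTheorem2:
  shows "Snum 0 0 0 = 0 \<and> Snum 0 0 1 = 1 \<and> Tnum 0 0 0 = 1 \<and> Tnum 0 0 1 = 0 \<and>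
    (\<forall>n\<ge>1. \<forall>i w. let N = (2::nat) ^ n in
       (i < N div 2 \<longrightarrow>
          Snum n i w = (\<Sum>w'\<in>{w'. w' \<le> min w (N div 2) \<and> w' mod 2 = w mod 2}.
             Snum (n - 1) i w' * ((N div 2 - w') choose ((w - w') div 2)) * 2 ^ w') \<and>
          Tnum n i w = (\<Sum>w'\<in>{w'. w' \<le> min w (N div 2) \<and> w' mod 2 = w mod 2}.
             Tnum (n - 1) i w' * ((N div 2 - w') choose ((w - w') div 2)) * 2 ^ w')) \<and>
       (N div 2 \<le> i \<and> i < N \<longrightarrow>
          Snum n i (2 * w) = Snum (n - 1) (i - N div 2) w \<and> Snum n i (2 * w + 1) = 0 \<and>
          Tnum n i (2 * w) = Tnum (n - 1) (i - N div 2) w \<and> Tnum n i (2 * w + 1) = 0))"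
proof -
  have c0: "coset 0 0 = {\<lambda>j. grow 0 0 j + 0}" by (simp add: coset_def base_span)
  have b: "Snum 0 0 0 = 0 \<and> Snum 0 0 1 = 1 \<and> Tnum 0 0 0 = 1 \<and> Tnum 0 0 1 = 0"
    unfolding Snum_eq Tnum_def c0 base_span using hw_g00 hw_zero[of 0] by (simp add: card_single)
  have r: "let N = (2::nat) ^ n in
       (i < N div 2 \<longrightarrow>
          Snum n i w = (\<Sum>w'\<in>{w'. w' \<le> min w (N div 2) \<and> w' mod 2 = w mod 2}.
             Snum (n - 1) i w' * ((N div 2 - w') choose ((w - w') div 2)) * 2 ^ w') \<and>
          Tnum n i w = (\<Sum>w'\<in>{w'. w' \<le> min w (N div 2) \<and> w' mod 2 = w mod 2}.
             Tnum (n - 1) i w' * ((N div 2 - w') choose ((w - w') div 2)) * 2 ^ w')) \<and>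
       (N div 2 \<le> i \<and> i < N \<longrightarrow>
          Snum n i (2 * w) = Snum (n - 1) (i - N div 2) w \<and> Snum n i (2 * w + 1) = 0 \<and>
          Tnum n i (2 * w) = Tnum (n - 1) (i - N div 2) w \<and> Tnum n i (2 * w + 1) = 0)"
    if n1: "n \<ge> 1" for n i w
  proof -
    obtain m where n: "n = Suc m" using n1 by (cases n) auto
    have h: "(2::nat) ^ n div 2 = 2^m" "n - 1 = m" "(2::nat)^n = 2*2^m" using n by auto
    have hi: "Snum n i (2 * w) = Snum (n - 1) (i - 2^m) w \<and> Snum n i (2 * w + 1) = 0 \<and>
          Tnum n i (2 * w) = Tnum (n - 1) (i - 2^m) w \<and> Tnum n i (2 * w + 1) = 0"
      if "2^m \<le> i" "i < 2*2^m"
    proof -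
      have "i = (i - 2^m) + 2^m" "i - 2^m < 2^m" using that by auto
      then show ?thesis using Snum_high[of "i - 2^m" m w] Tnum_high[of "i - 2^m" m w] n by simp
    qed
    show ?thesis unfolding Let_def h using Snum_low[of i m w] Tnum_low[of i m w] hi n by auto
  qed
  show ?thesis using b r by blast
qed

end
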